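(* Let $m\in\mathbb N$, $m\ge1$, and let $x_0,x_1\in\mathbb C_p$ with $|x_0|=|x_1|=\rho_m$ and $|x_0-x_1|\le S$. If $\lambda_0,\lambda_1\in\Lambda$ satisfy $$\rho_{m-1}\cdots\rho_1\,|x_0-x_1|<|\lambda_0-\lambda_1|\le S,$$ then $|Q^m_{\lambda_0}(x_0)-Q^m_{\lambda_1}(x_1)|=|\lambda_0-\lambda_1|$.
   Context: Let $p$ be a prime, $\mathbb C_p$ with $p$-adic absolute value, $|p|=1/p$. $\Lambda=\{\lambda\in\mathbb C_p:|\lambda-1|<1\}$, $P_\lambda(z)=\frac{\lambda}{p}z^p+\left(1-\frac{\lambda}{p}\right)z^{p+1}$, $\rho=p^{-1/(p-1)}$; $S>0$ is defined by $pS^{p-1}=\rho$; $\rho_0=1$ and $p\rho_n^p=\rho_{n-1}$ for $n\ge1$ (empty products equal $1$). Fix $\hat r\in|\mathbb C_p^*|$, $\hat r>1$, $B=\{z:|z|\le\hat r\}$; $\mathcal H(B)$ is the ring of power series $\sum a_iz^i$ convergent on $B$ with norm $\|f\|_B=\sup_i|a_i|\hat r^{\,i}$. Fix $Q\in\mathcal H(B)$ with $\|Q\|_B<\rho$, $Q^*_\lambda=P_\lambda+Q$, and let $h(\lambda)$ be the unique fixed point of $Q^*_\lambda$ in $\{z:|z-1|\le|Q(1)|/p\}$. Define $Q_\lambda(z)=P_\lambda(z+h(\lambda)-1)+Q(z+h(\lambda)-1)+1-h(\lambda)$ for $z\in B$. *)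

theory Defs
  imports "HOL-Analysis.Analysis" "HOL-Computational_Algebra.Polynomial"
begin

text \<open>A model of the field C_p: a field with a non-archimedean absolute value av,
  normalised by av p = 1/p, complete, algebraically closed, in which the algebraic
  numbers are dense. Such a field is isometrically isomorphic to C_p.\<close>

definition is_Cp :: "nat \<Rightarrow> ('a::field \<Rightarrow> real) \<Rightarrow> bool" where
  "is_Cp p av \<longleftrightarrow>
     (\<forall>x. 0 \<le> av x) \<and> (\<forall>x. av x = 0 \<longleftrightarrow> x = 0) \<and>
     (\<forall>x y. av (x * y) = av x * av y) \<and>
     (\<forall>x y. av (x + y) \<le> max (av x) (av y)) \<and>
     av (of_nat p) = 1 / real p \<and>
     (\<forall>X :: nat \<Rightarrow> 'a. (\<forall>e>0. \<exists>N. \<forall>m\<ge>N. \<forall>n\<ge>N. av (X m - X n) < e)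
          \<longrightarrow> (\<exists>L. (\<lambda>n. av (X n - L)) \<longlonglongrightarrow> 0)) \<and>
     (\<forall>q :: 'a poly. degree q > 0 \<longrightarrow> (\<exists>z. poly q z = 0)) \<and>
     (\<forall>x. \<forall>e>0. \<exists>y. av (x - y) < e \<and>
          (\<exists>q :: int poly. q \<noteq> 0 \<and> poly (map_poly of_int q) y = 0))"

definition ps_eval :: "('a::field \<Rightarrow> real) \<Rightarrow> (nat \<Rightarrow> 'a) \<Rightarrow> 'a \<Rightarrow> 'a" where
  "ps_eval av a z = (THE s. (\<lambda>n. av ((\<Sum>i<n. a i * z ^ i) - s)) \<longlonglongrightarrow> 0)"

text \<open>Membership in H(B), B the closed disc of radius rh: |a_i| rh^i \<rightarrow> 0.\<close>
definition in_HB :: "('a::field \<Rightarrow> real) \<Rightarrow> real \<Rightarrow> (nat \<Rightarrow> 'a) \<Rightarrow> bool" where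
  "in_HB av rh a \<longleftrightarrow> (\<lambda>i. av (a i) * rh ^ i) \<longlonglongrightarrow> 0"

definition norm_HB :: "('a::field \<Rightarrow> real) \<Rightarrow> real \<Rightarrow> (nat \<Rightarrow> 'a) \<Rightarrow> real" where
  "norm_HB av rh a = (SUP i. av (a i) * rh ^ i)"

definition Pl :: "nat \<Rightarrow> 'a::field \<Rightarrow> 'a \<Rightarrow> 'a" where
  "Pl p l z = l / of_nat p * z ^ p + (1 - l / of_nat p) * z ^ (p + 1)"

definition rho :: "nat \<Rightarrow> real" where
  "rho p = real p powr (- 1 / (real p - 1))"

text \<open>S > 0 with p S^(p-1) = rho.\<close>
definition S_const :: "nat \<Rightarrow> real" where
  "S_const p = (rho p / real p) powr (1 / (real p - 1))"

text \<open>rho_0 = 1, p rho_n^p = rho_(n-1).\<close>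
fun rho_seq :: "nat \<Rightarrow> nat \<Rightarrow> real" where
  "rho_seq p 0 = 1"
| "rho_seq p (Suc n) = (rho_seq p n / real p) powr (1 / real p)"

text \<open>h(lambda): the unique fixed point of P_lambda + Q in |z - 1| <= |Q(1)|/p.\<close>
definition hfix :: "nat \<Rightarrow> ('a::field \<Rightarrow> real) \<Rightarrow> (nat \<Rightarrow> 'a) \<Rightarrow> 'a \<Rightarrow> 'a" where
  "hfix p av a l = (THE z. av (z - 1) \<le> av (ps_eval av a 1) / real p \<and>
                           Pl p l z + ps_eval av a z = z)"

definition Qlam :: "nat \<Rightarrow> ('a::field \<Rightarrow> real) \<Rightarrow> (nat \<Rightarrow> 'a) \<Rightarrow> 'a \<Rightarrow> 'a \<Rightarrow> 'a" where
  "Qlam p av a l z = (let h = hfix p av a l in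
      Pl p l (z + h - 1) + ps_eval av a (z + h - 1) + 1 - h)"

end

theory Submission
  imports Defs "HOL-Computational_Algebra.Primes"
begin


locale vf =
  fixes p :: nat and av :: "'a::field \<Rightarrow> real"
  assumes prime: "prime p" and cp: "is_Cp p av"
begin

lemma av_nonneg: "0 \<le> av x"
  using cp[unfolded is_Cp_def, THEN conjunct1] by blast
lemma av_0_iff: "av x = 0 \<longleftrightarrow> x = 0"
  using cp[unfolded is_Cp_def, THEN conjunct2, THEN conjunct1] by blast
lemma av_mult: "av (x*y) = av x * av y"
  using cp[unfolded is_Cp_def, THEN conjunct2, THEN conjunct2, THEN conjunct1] by blast
lemma av_ultra: "av (x+y) \<le> max (av x) (av y)"
  using cp[unfolded is_Cp_def, THEN conjunct2, THEN conjunct2, THEN conjunct2, THEN conjunct1] by blast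
lemma av_p: "av (of_nat p) = 1 / real p"
  using cp[unfolded is_Cp_def, THEN conjunct2, THEN conjunct2, THEN conjunct2, THEN conjunct2, THEN conjunct1] .
lemma av_complete: "(\<forall>e>0. \<exists>N. \<forall>m\<ge>N. \<forall>n\<ge>N. av (X m - X n) < e) \<Longrightarrow> \<exists>L. (\<lambda>n. av (X n - L)) \<longlonglongrightarrow> 0"
  using cp[unfolded is_Cp_def, THEN conjunct2, THEN conjunct2, THEN conjunct2, THEN conjunct2, THEN conjunct2, THEN conjunct1] by blast

lemma av_0[simp]: "av 0 = 0" using av_0_iff by blast

lemma p_ge2: "p \<ge> 2" using prime prime_ge_2_nat by blast
lemma p_pos: "real p > 0" using p_ge2 by simp

lemma av_1[simp]: "av 1 = 1"
proof -
  have "av 1 = av 1 * av 1" using av_mult[of 1 1] by simp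
  moreover have "av 1 \<noteq> 0" using av_0_iff by simp
  ultimately show ?thesis by simp
qed

lemma av_m1: "av (-1) = 1"
proof -
  have h: "av (-1) * av (-1) = 1" using av_mult[of "-1" "-1"] by simp
  have "(av (-1) - 1) * (av (-1) + 1) = av (-1) * av (-1) - 1" by (simp add: algebra_simps)
  then have "(av (-1) - 1) * (av (-1) + 1) = 0" using h by simp
  moreover have "av (-1) + 1 \<noteq> 0" using av_nonneg[of "-1"] by linarith
  ultimately show ?thesis by simp
qed

lemma av_minus[simp]: "av (-x) = av x"
  using av_mult[of "-1" x] av_m1 by simp

lemma av_diff_comm: "av (x - y) = av (y - x)"
  using av_minus[of "x - y"] by simp

lemma av_diff: "av (x - y) \<le> max (av x) (av y)"
  using av_ultra[of x "-y"] by simp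

lemma av_power: "av (x^n) = av x ^ n"
  by (induction n) (simp_all add: av_mult)

lemma av_divide: "av (x / y) = av x / av y"
proof (cases "y = 0")
  case True then show ?thesis by simp
next
  case False
  have h: "av y * av (inverse y) = 1" using av_mult[of y "inverse y"] False by simp
  have nz: "av y \<noteq> 0" using False av_0_iff by simp
  from h nz have "av (inverse y) = 1 / av y" by (simp add: field_simps)
  then show ?thesis by (simp add: divide_inverse av_mult)
qed

lemma av_of_nat_le: "av (of_nat n) \<le> 1"
proof (induction n)
  case 0 then show ?case by simp
next
  case (Suc n)
  have "av (of_nat (Suc n)) = av (1 + of_nat n)" by simp
  also have "\<dots> \<le> max (av 1) (av (of_nat n))" by (rule av_ultra)
  finally show ?case using Suc by simp
qed

lemma av_strict: assumes "av y < av x" shows "av (x + y) = av x"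
proof -
  have 1: "av (x + y) \<le> av x" using av_ultra[of x y] assms by simp
  have "av x \<le> max (av (x+y)) (av y)" using av_ultra[of "x+y" "-y"] by simp
  then have "av x \<le> av (x+y)" using assms by simp
  then show ?thesis using 1 by simp
qed

lemma av_strict_diff: "av y < av x \<Longrightarrow> av (x - y) = av x"
  using av_strict[of "-y" x] by simp

lemma av_sum: "finite A \<Longrightarrow> (\<And>i. i \<in> A \<Longrightarrow> av (f i) \<le> M) \<Longrightarrow> 0 \<le> M \<Longrightarrow> av (sum f A) \<le> M"
proof (induction A rule: finite_induct)
  case empty then show ?case by simp
next
  case (insert x F)
  have "av (sum f (insert x F)) = av (f x + sum f F)" using insert by simp
  also have "\<dots> \<le> max (av (f x)) (av (sum f F))" by (rule av_ultra)
  moreover have "av (f x) \<le> M" using insert.prems by simp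
  moreover have "av (sum f F) \<le> M" using insert.IH insert.prems by simp
  ultimately show ?case by simp
qed

lemma av_of_nat_dvd: assumes "p dvd n" shows "av (of_nat n :: 'a) \<le> 1 / real p"
proof -
  obtain q where "n = p * q" using assms by (rule dvdE)
  then have "av (of_nat n :: 'a) = av (of_nat p) * av (of_nat q)" by (simp add: av_mult)
  also have "\<dots> \<le> av (of_nat p :: 'a) * 1"
    by (rule mult_left_mono[OF av_of_nat_le av_nonneg])
  also have "\<dots> = 1 / real p" by (simp only: mult_1_right av_p)
  finally show ?thesis .
qed


lemma av_pow_diff:
  assumes "av x \<le> R" "av y \<le> R"
  shows "av (x^n - y^n) \<le> av (x - y) * R^(n-1)"
proof (induction n)
  case 0 then show ?case using av_nonneg by simp
next
  case (Suc n)
  have R0: "0 \<le> R" using assms(1) av_nonneg[of x] by linarith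
  have e: "x^Suc n - y^Suc n = x * (x^n - y^n) + (x - y) * y^n" by (simp add: algebra_simps)
  have t1: "av (x * (x^n - y^n)) \<le> av (x - y) * R^n"
  proof (cases n)
    case 0 then show ?thesis using av_nonneg by simp
  next
    case (Suc k)
    have "av (x * (x^n - y^n)) = av x * av (x^n - y^n)" by (rule av_mult)
    also have "\<dots> \<le> R * (av (x - y) * R^(n-1))"
      by (rule mult_mono[OF assms(1) Suc.IH R0 av_nonneg])
    also have "\<dots> = av (x - y) * R^n" using Suc by simp
    finally show ?thesis .
  qed
  have "av ((x - y) * y^n) = av (x - y) * av y ^ n" by (simp only: av_mult av_power)
  also have "\<dots> \<le> av (x - y) * R^n"
    by (rule mult_left_mono[OF power_mono[OF assms(2) av_nonneg] av_nonneg])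
  finally have t2: "av ((x - y) * y^n) \<le> av (x - y) * R^n" .
  have "av (x^Suc n - y^Suc n) \<le> max (av (x * (x^n - y^n))) (av ((x - y) * y^n))"
    unfolding e by (rule av_ultra)
  then show ?case using order_trans[OF _ max.boundedI[OF t1 t2]] by simp
qed

lemma av_binom:
  assumes "av d \<le> av z"
  shows "av ((z + d)^p - z^p) \<le> max (av z ^ (p-1) * av d / real p) (av d ^ p)"
proof -
  define M where "M = max (av z ^ (p-1) * av d / real p) (av d ^ p)"
  have M0: "0 \<le> M" unfolding M_def using av_nonneg by (simp add: le_max_iff_disj)
  obtain q where pq: "p = Suc q" using p_ge2 by (cases p) auto
  have "(d + z)^p = (\<Sum>k\<le>p. of_nat (p choose k) * d^k * z^(p-k))" by (rule binomial_ring)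
  also have "\<dots> = z^p + (\<Sum>k\<le>q. of_nat (p choose Suc k) * d^Suc k * z^(p - Suc k))"
  proof -
    have "(\<Sum>k\<le>p. of_nat (p choose k) * d^k * z^(p-k)) = (\<Sum>k\<le>Suc q. of_nat (p choose k) * d^k * z^(p-k))"
      using pq by simp
    also have "\<dots> = of_nat (p choose 0) * d^0 * z^(p-0) + (\<Sum>k\<le>q. of_nat (p choose Suc k) * d^Suc k * z^(p - Suc k))"
      by (rule sum.atMost_Suc_shift)
    finally show ?thesis by simp
  qed
  finally have e: "(z + d)^p - z^p = (\<Sum>k\<le>q. of_nat (p choose Suc k) * d^Suc k * z^(p - Suc k))"
    by (simp add: add.commute)
  have "av (\<Sum>k\<le>q. of_nat (p choose Suc k) * d^Suc k * z^(p - Suc k)) \<le> M"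
  proof (rule av_sum)
    fix k assume k: "k \<in> {..q}"
    show "av (of_nat (p choose Suc k) * d^Suc k * z^(p - Suc k)) \<le> M"
    proof (cases "k = q")
      case True
      then show ?thesis using pq by (simp add: av_mult av_power M_def)
    next
      case False
      then have kq: "k < q" using k by simp
      have dv: "p dvd (p choose Suc k)" using prime pq kq by (intro dvd_choose_prime) auto
      have c: "av (of_nat (p choose Suc k) :: 'a) \<le> 1 / real p" by (rule av_of_nat_dvd[OF dv])
      have "av d ^ Suc k * av z ^ (p - Suc k) = av d * (av d ^ k * av z ^ (p - Suc k))" by simp
      also have "\<dots> \<le> av d * (av z ^ k * av z ^ (p - Suc k))"
        using assms av_nonneg by (intro mult_left_mono mult_right_mono power_mono) auto
      also have "\<dots> = av d * av z ^ (p - 1)" using kq pq by (simp add: power_add[symmetric])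
      finally have b: "av d ^ Suc k * av z ^ (p - Suc k) \<le> av z ^ (p - 1) * av d" by (simp add: mult.commute)
      have "av (of_nat (p choose Suc k) * d^Suc k * z^(p - Suc k))
          = av (of_nat (p choose Suc k) :: 'a) * (av d ^ Suc k * av z ^ (p - Suc k))"
        by (simp add: av_mult av_power)
      also have "\<dots> \<le> 1 / real p * (av z ^ (p - 1) * av d)"
        by (rule mult_mono[OF c b]) (use av_nonneg p_pos in auto)
      also have "\<dots> \<le> M" unfolding M_def by simp
      finally show ?thesis .
    qed
  qed (simp_all add: M0)
  then show ?thesis unfolding e M_def[symmetric] .
qed

end



lemma powr_inv_pow: assumes "0 < (x::real)" "0 < n" shows "(x powr (1 / real n)) ^ n = x"
proof -
  have "(x powr (1/real n))^n = (x powr (1/real n)) powr (real n)"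
    by (rule powr_realpow[symmetric]) (use assms in simp)
  also have "\<dots> = x powr (1/real n * real n)" by (rule powr_powr)
  also have "\<dots> = x" using assms by simp
  finally show ?thesis .
qed

lemma le_lim: fixes X :: "nat \<Rightarrow> real"
  assumes "X \<longlonglongrightarrow> 0" "\<And>n. c \<le> max (X n) d" "0 \<le> d" shows "c \<le> d"
proof -
  have "(\<lambda>n. \<bar>X n\<bar> + d) \<longlonglongrightarrow> 0 + d"
    by (intro tendsto_add tendsto_rabs_zero assms(1) tendsto_const)
  moreover have "\<exists>N. \<forall>n\<ge>N. c \<le> \<bar>X n\<bar> + d"
  proof (intro exI[of _ 0] allI impI)
    fix n
    have "max (X n) d \<le> \<bar>X n\<bar> + d" using assms(3) by (auto simp: max_def abs_if)
    then show "c \<le> \<bar>X n\<bar> + d" using assms(2)[of n] by linarith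
  qed
  ultimately have "c \<le> 0 + d" by (rule LIMSEQ_le_const)
  then show ?thesis by simp
qed

declare rho_seq.simps(2)[simp del]

context vf
begin

lemma real_p1: "real (p - 1) = real p - 1" using p_ge2 by simp

lemma rho_pos: "0 < rho p" unfolding rho_def using p_pos by simp

lemma rho_pow: "rho p ^ (p-1) = 1 / real p"
proof -
  have "rho p ^ (p-1) = rho p powr real (p-1)" using rho_pos by (simp add: powr_realpow)
  also have "\<dots> = real p powr (-1)" unfolding rho_def powr_powr real_p1 using p_ge2 by simp
  also have "\<dots> = 1 / real p" using p_pos by (simp add: powr_minus divide_inverse)
  finally show ?thesis .
qed

lemma rho_pow_p: "rho p ^ p = rho p / real p"
proof -
  have "rho p ^ p = rho p ^ Suc (p-1)" using p_ge2 by simp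
  also have "\<dots> = rho p * rho p ^ (p-1)" by (rule power_Suc)
  finally have "rho p ^ p = rho p * rho p ^ (p-1)" .
  then show ?thesis using rho_pow by simp
qed

lemma rho_lt1: "rho p < 1"
proof (rule ccontr)
  assume "\<not> rho p < 1"
  then have "1 \<le> rho p ^ (p-1)" by (simp add: one_le_power)
  then show False using rho_pow p_ge2 by simp
qed

lemma rho_ge: "1 / real p \<le> rho p"
proof -
  have "rho p ^ (p-1) \<le> rho p ^ 1" using rho_pos rho_lt1 p_ge2 by (intro power_decreasing) auto
  then show ?thesis using rho_pow by simp
qed

lemma S_pos: "0 < S_const p" unfolding S_const_def using rho_pos p_pos by simp

lemma S_pow: "S_const p ^ (p-1) = rho p / real p"
  unfolding S_const_def real_p1[symmetric] using rho_pos p_pos p_ge2 by (intro powr_inv_pow) auto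

lemma S_le_rho: "S_const p \<le> rho p"
proof -
  obtain q where q: "p - 1 = Suc q" using p_ge2 by (cases "p - 1") auto
  have "rho p ^ p \<le> rho p ^ (p - 1)"
    using rho_pos rho_lt1 by (intro power_decreasing) auto
  then have "S_const p ^ Suc q \<le> rho p ^ Suc q"
    using S_pow rho_pow_p q by simp
  then show ?thesis using power_le_imp_le_base[of "S_const p" q "rho p"] rho_pos by simp
qed

lemma p_pos_nat: "0 < p" using p_ge2 by simp

lemma rs_pos: "0 < rho_seq p j"
proof (induction j)
  case 0 show ?case by (simp only: rho_seq.simps(1) zero_less_one)
next
  case (Suc j)
  have "0 < rho_seq p j / real p" using Suc.IH p_pos by (rule divide_pos_pos)
  then show ?case unfolding rho_seq.simps(2) by (intro powr_gt_zero[THEN iffD2]) (rule less_imp_neq[symmetric])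
qed

lemma rs_pow: "rho_seq p (Suc j) ^ p = rho_seq p j / real p"
  unfolding rho_seq.simps(2) by (rule powr_inv_pow[OF divide_pos_pos[OF rs_pos p_pos] p_pos_nat])

lemma pow_le_base: "0 \<le> (y::real) \<Longrightarrow> x ^ p \<le> y ^ p \<Longrightarrow> x \<le> y"
  using power_le_imp_le_base[of x "p - 1" y] p_pos_nat by simp

lemma rs_dec: "rho_seq p (Suc j) \<le> rho_seq p j"
proof (induction j)
  case 0
  have "rho_seq p (Suc 0) ^ p = 1 / real p" using rs_pow[of 0] by (simp only: rho_seq.simps(1))
  also have "\<dots> \<le> rho_seq p 0 ^ p" using p_ge2 by simp
  finally show ?case by (rule pow_le_base[rotated]) simp
next
  case (Suc j)
  have "rho_seq p (Suc (Suc j)) ^ p \<le> rho_seq p (Suc j) ^ p"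
    unfolding rs_pow using Suc p_pos by (simp add: divide_right_mono)
  then show ?case by (rule pow_le_base[rotated]) (rule less_imp_le[OF rs_pos])
qed

lemma rs_mono: "i \<le> j \<Longrightarrow> rho_seq p j \<le> rho_seq p i"
  by (rule lift_Suc_antimono_le[of "rho_seq p", OF rs_dec])

lemma rs_le1: "rho_seq p j \<le> 1"
  using rs_mono[of 0 j] by simp

lemma rs_ge: "rho p \<le> rho_seq p j"
proof (induction j)
  case 0 then show ?case using rho_lt1 by simp
next
  case (Suc j)
  have "rho p ^ p \<le> rho_seq p (Suc j) ^ p"
    unfolding rs_pow rho_pow_p using Suc p_pos by (simp add: divide_right_mono)
  then show ?case by (rule pow_le_base[rotated]) (rule less_imp_le[OF rs_pos])
qed

lemma rs_lt1: "rho_seq p (Suc j) < 1"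
proof (rule ccontr)
  assume "\<not> rho_seq p (Suc j) < 1"
  then have "1 \<le> rho_seq p (Suc j) ^ p" by (simp add: one_le_power)
  moreover have "rho_seq p j / real p < 1" using rs_le1[of j] p_ge2 by (simp add: divide_less_eq)
  ultimately show False using rs_pow by simp
qed

lemma prs_ge1: "1 \<le> real p * rho_seq p j"
proof -
  have "1 / real p \<le> rho_seq p j" using order_trans[OF rho_ge rs_ge] .
  then show ?thesis using p_pos by (simp add: divide_le_eq mult.commute)
qed

lemma av_lim_unique:
  assumes "(\<lambda>n. av (X n - s)) \<longlonglongrightarrow> 0" "(\<lambda>n. av (X n - t)) \<longlonglongrightarrow> 0"
  shows "s = t"
proof -
  have "(\<lambda>n. av (X n - s) + av (X n - t)) \<longlonglongrightarrow> 0 + 0" by (rule tendsto_add[OF assms])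
  moreover have "\<exists>N. \<forall>n\<ge>N. av (s - t) \<le> av (X n - s) + av (X n - t)"
  proof (intro exI[of _ 0] allI impI)
    fix n
    have "av (s - t) = av ((s - X n) + (X n - t))" by simp
    also have "\<dots> \<le> max (av (s - X n)) (av (X n - t))" by (rule av_ultra)
    also have "\<dots> \<le> av (X n - s) + av (X n - t)" using av_nonneg av_diff_comm by (simp add: max_def)
    finally show "av (s - t) \<le> av (X n - s) + av (X n - t)" .
  qed
  ultimately have "av (s - t) \<le> 0 + 0" by (rule LIMSEQ_le_const)
  then have "av (s - t) = 0" using order_antisym[OF _ av_nonneg] by simp
  then show ?thesis using av_0_iff by simp
qed

end




locale cpa = vf +
  fixes rh :: real and a :: "nat \<Rightarrow> 'a::field"
  assumes rh: "rh > 1" and hb: "in_HB av rh a" and nrm: "norm_HB av rh a < rho p"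
begin

abbreviation "nQ \<equiv> norm_HB av rh a"
abbreviation "ps \<equiv> ps_eval av a"
definition psum :: "nat \<Rightarrow> 'a \<Rightarrow> 'a" where "psum n z = (\<Sum>i<n. a i * z^i)"

lemma a_le: "av (a i) \<le> nQ"
proof -
  have bdd: "bdd_above (range (\<lambda>i. av (a i) * rh ^ i))"
    using hb unfolding in_HB_def by (intro Bseq_bdd_above convergent_imp_Bseq convergentI)
  have "av (a i) = av (a i) * 1" by simp
  also have "\<dots> \<le> av (a i) * rh ^ i" using rh av_nonneg by (intro mult_left_mono one_le_power) auto
  also have "\<dots> \<le> nQ" unfolding norm_HB_def using bdd by (intro cSUP_upper) auto
  finally show ?thesis .
qed

lemma nQ_nonneg: "0 \<le> nQ" using order_trans[OF av_nonneg a_le] .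
lemma nQ_lt1: "nQ < 1" using nrm rho_lt1 by simp

lemma a_lim: "(\<lambda>i. av (a i)) \<longlonglongrightarrow> 0"
proof (rule Lim_null_comparison)
  show "\<forall>\<^sub>F i in sequentially. norm (av (a i)) \<le> av (a i) * rh ^ i"
  proof (intro always_eventually allI)
    fix i
    have "av (a i) * 1 \<le> av (a i) * rh ^ i" using rh av_nonneg by (intro mult_left_mono one_le_power) auto
    then show "norm (av (a i)) \<le> av (a i) * rh ^ i" using av_nonneg by simp
  qed
  show "(\<lambda>i. av (a i) * rh ^ i) \<longlonglongrightarrow> 0" using hb unfolding in_HB_def .
qed

lemma psum_diff: "n \<le> m \<Longrightarrow> psum m z - psum n z = (\<Sum>i\<in>{n..<m}. a i * z^i)"
  unfolding psum_def lessThan_atLeast0 by (rule sum_diff_nat_ivl) auto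

lemma ps_conv: assumes z: "av z \<le> 1" shows "(\<lambda>n. av (psum n z - ps z)) \<longlonglongrightarrow> 0"
proof -
  have cau: "\<forall>e>0. \<exists>K. \<forall>m\<ge>K. \<forall>n\<ge>K. av (psum m z - psum n z) < e"
  proof (intro allI impI)
    fix e :: real assume e: "e > 0"
    then have "e/2 > 0" by simp
    then obtain K where K0: "\<forall>i\<ge>K. norm (av (a i) - 0) < e/2"
      using a_lim unfolding LIMSEQ_iff by blast
    have K: "av (a i) < e/2" if "i \<ge> K" for i
    proof -
      have "norm (av (a i) - 0) < e/2" using K0 that by blast
      then show ?thesis using av_nonneg[of "a i"] by (simp add: abs_of_nonneg)
    qed
    have key: "av (psum m z - psum n z) \<le> e/2" if "K \<le> n" "n \<le> m" for m n
    proof -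
      have "av (\<Sum>i\<in>{n..<m}. a i * z^i) \<le> e/2"
      proof (rule av_sum)
        fix i assume "i \<in> {n..<m}"
        then have "av (a i) < e/2" using K that by auto
        moreover have "av z ^ i \<le> 1" using z av_nonneg by (simp add: power_le_one)
        moreover have "av (a i) * av z ^ i \<le> av (a i) * 1"
          by (rule mult_left_mono[OF _ av_nonneg]) fact
        ultimately have "av (a i) * av z ^ i \<le> e/2" by simp
        then show "av (a i * z^i) \<le> e/2" by (simp add: av_mult av_power)
      qed (use e in auto)
      then show ?thesis using psum_diff[OF that(2)] by simp
    qed
    show "\<exists>K. \<forall>m\<ge>K. \<forall>n\<ge>K. av (psum m z - psum n z) < e"
    proof (intro exI allI impI)
      fix m n assume "K \<le> m" "K \<le> n"
      then have "av (psum m z - psum n z) \<le> e/2"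
        using key[of n m] key[of m n] av_diff_comm by (cases "n \<le> m") auto
      then show "av (psum m z - psum n z) < e" using e by simp
    qed
  qed
  obtain L where L: "(\<lambda>n. av (psum n z - L)) \<longlonglongrightarrow> 0" using av_complete[OF cau] by blast
  have "ps z = L" unfolding ps_eval_def
  proof (rule the_equality)
    show "(\<lambda>n. av ((\<Sum>i<n. a i * z ^ i) - L)) \<longlonglongrightarrow> 0" using L unfolding psum_def .
    fix s assume "(\<lambda>n. av ((\<Sum>i<n. a i * z ^ i) - s)) \<longlonglongrightarrow> 0"
    then have "(\<lambda>n. av (psum n z - s)) \<longlonglongrightarrow> 0" unfolding psum_def .
    then show "s = L" by (rule av_lim_unique[OF _ L])
  qed
  then show ?thesis using L by simp
qed

lemma ps_diff: assumes z: "av z \<le> 1" and w: "av w \<le> 1"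
  shows "av (ps z - ps w) \<le> nQ * av (z - w)"
proof (rule le_lim)
  let ?X = "\<lambda>n. max (av (psum n z - ps z)) (av (psum n w - ps w))"
  show "?X \<longlonglongrightarrow> 0" using tendsto_max[OF ps_conv[OF z] ps_conv[OF w]] by simp
  fix n
  have ps: "av (psum n z - psum n w) \<le> nQ * av (z - w)"
  proof -
    have "psum n z - psum n w = (\<Sum>i<n. a i * (z^i - w^i))"
      unfolding psum_def by (simp add: sum_subtractf right_diff_distrib)
    moreover have "av (\<Sum>i<n. a i * (z^i - w^i)) \<le> nQ * av (z - w)"
    proof (rule av_sum)
      fix i
      have "av (z^i - w^i) \<le> av (z - w) * 1 ^ (i - 1)" by (rule av_pow_diff[OF z w])
      then have "av (z^i - w^i) \<le> av (z - w)" by simp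
      then show "av (a i * (z^i - w^i)) \<le> nQ * av (z - w)"
        unfolding av_mult by (rule mult_mono[OF a_le _ nQ_nonneg av_nonneg])
    qed (use nQ_nonneg av_nonneg in auto)
    ultimately show ?thesis by simp
  qed
  have "av (ps z - ps w) = av ((ps z - psum n z) + ((psum n z - psum n w) + (psum n w - ps w)))" by simp
  also have "\<dots> \<le> max (av (ps z - psum n z)) (max (av (psum n z - psum n w)) (av (psum n w - ps w)))"
    by (rule order_trans[OF av_ultra max.mono[OF order_refl av_ultra]])
  also have "\<dots> \<le> max (?X n) (nQ * av (z - w))"
    using ps av_diff_comm[of "ps z" "psum n z"] by (auto simp: max_def)
  finally show "av (ps z - ps w) \<le> max (?X n) (nQ * av (z - w))" .
next
  show "0 \<le> nQ * av (z - w)" using nQ_nonneg av_nonneg by simp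
qed

lemma ps_bound: assumes z: "av z \<le> 1" shows "av (ps z) \<le> nQ"
proof (rule le_lim)
  show "(\<lambda>n. av (psum n z - ps z)) \<longlonglongrightarrow> 0" by (rule ps_conv[OF z])
  fix n
  have b: "av (psum n z) \<le> nQ" unfolding psum_def
  proof (rule av_sum)
    fix i
    have "av z ^ i \<le> 1" using z av_nonneg by (simp add: power_le_one)
    then have "av (a i) * av z ^ i \<le> av (a i) * 1"
      by (rule mult_left_mono[OF _ av_nonneg])
    then show "av (a i * z^i) \<le> nQ" unfolding av_mult av_power
      using a_le[of i] by simp
  qed (use nQ_nonneg in auto)
  have "av (ps z) = av (psum n z + (ps z - psum n z))" by simp
  also have "\<dots> \<le> max (av (psum n z)) (av (ps z - psum n z))" by (rule av_ultra)
  also have "\<dots> \<le> max (av (psum n z - ps z)) nQ" using b av_diff_comm[of "ps z"] by (auto simp: max_def)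
  finally show "av (ps z) \<le> max (av (psum n z - ps z)) nQ" .
next
  show "0 \<le> nQ" by (rule nQ_nonneg)
qed

end



context cpa
begin

definition G :: "'a \<Rightarrow> 'a \<Rightarrow> 'a" where "G l z = Pl p l z + ps z - z"

lemma ofp_nz: "(of_nat p :: 'a) \<noteq> 0"
proof
  assume "(of_nat p :: 'a) = 0"
  then have "av (of_nat p :: 'a) = 0" by simp
  then show False using av_p p_pos by simp
qed

lemma lam_av: assumes "av (l - 1) < 1" shows "av l = 1"
proof -
  have "av (1 + (l - 1)) = av 1" by (rule av_strict) (use assms in simp)
  then show ?thesis by simp
qed

lemma lam_nz: "av (l - 1) < 1 \<Longrightarrow> l \<noteq> 0"
  using lam_av[of l] by auto

lemma av_c: "av (l - 1) < 1 \<Longrightarrow> av (l / of_nat p) = real p"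
  using lam_av[of l] av_p p_pos by (simp add: av_divide)

lemma av_cinv: "av (l - 1) < 1 \<Longrightarrow> av (of_nat p / l) = 1 / real p"
  using lam_av[of l] av_p p_pos by (simp add: av_divide)

lemma disc_av: assumes "av (x - 1) \<le> nQ / real p" shows "av x \<le> 1"
proof -
  have "nQ / real p \<le> 1" using nQ_lt1 nQ_nonneg p_ge2 by (simp add: divide_le_eq)
  have "av x = av (1 + (x - 1))" by simp
  also have "\<dots> \<le> max (av 1) (av (x - 1))" by (rule av_ultra)
  finally show ?thesis using assms \<open>nQ / real p \<le> 1\<close> by simp
qed

lemma G_ident:
  fixes c x y X Y u v :: 'a
  shows "(c * X + (1 - c) * (X * x) + u - x) - (c * Y + (1 - c) * (Y * y) + v - y) + c * (x - y)
       = c * ((x - y) * (1 - X) + (y - 1) * (Y - X)) + (X * x - Y * y) + (u - v) - (x - y)"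
  by (simp add: algebra_simps)

lemma Pl_eq: "Pl p l z = (l / of_nat p) * z^p + (1 - l / of_nat p) * (z^p * z)"
  unfolding Pl_def by simp

lemma G_key:
  assumes l: "av (l - 1) < 1" and x: "av (x - 1) \<le> nQ / real p" and y: "av (y - 1) \<le> nQ / real p"
  shows "av (G l x - G l y + (l / of_nat p) * (x - y)) \<le> av (x - y)"
proof -
  define c where "c = l / (of_nat p :: 'a)"
  define d where "d = av (x - y)"
  have ax: "av x \<le> 1" by (rule disc_av[OF x])
  have ay: "av y \<le> 1" by (rule disc_av[OF y])
  have d0: "0 \<le> d" unfolding d_def by (rule av_nonneg)
  have e: "G l x - G l y + c * (x - y) = c * ((x - y) * (1 - x^p) + (y - 1) * (y^p - x^p))
      + (x^p * x - y^p * y) + (ps x - ps y) - (x - y)"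
    unfolding G_def Pl_eq c_def[symmetric] by (rule G_ident)
  have b1: "av (1 - x^p) \<le> nQ / real p"
  proof -
    have "av (x^p - 1^p) \<le> av (x - 1) * 1^(p-1)" by (rule av_pow_diff[OF ax]) simp
    then show ?thesis using x av_diff_comm[of 1 "x^p"] by simp
  qed
  have b2: "av (y^p - x^p) \<le> d" using av_pow_diff[OF ay ax, of p] av_diff_comm[of y x] unfolding d_def by simp
  have t1: "av ((x - y) * (1 - x^p)) \<le> d * (nQ / real p)"
    unfolding av_mult d_def by (rule mult_left_mono[OF b1 av_nonneg])
  have t2: "av ((y - 1) * (y^p - x^p)) \<le> d * (nQ / real p)"
    unfolding av_mult using mult_mono[OF y b2 _ av_nonneg] nQ_nonneg p_pos by (simp add: mult.commute)
  have "av ((x - y) * (1 - x^p) + (y - 1) * (y^p - x^p)) \<le> d * (nQ / real p)"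
    using order_trans[OF av_ultra max.boundedI[OF t1 t2]] .
  then have "real p * av ((x - y) * (1 - x^p) + (y - 1) * (y^p - x^p)) \<le> real p * (d * (nQ / real p))"
    by (rule mult_left_mono) (use p_pos in simp)
  moreover have "av (c * ((x - y) * (1 - x^p) + (y - 1) * (y^p - x^p)))
      = real p * av ((x - y) * (1 - x^p) + (y - 1) * (y^p - x^p))"
    unfolding av_mult c_def av_c[OF l] ..
  ultimately have "av (c * ((x - y) * (1 - x^p) + (y - 1) * (y^p - x^p))) \<le> real p * (d * (nQ / real p))"
    by simp
  also have "\<dots> = d * nQ" using p_pos by simp
  also have "\<dots> \<le> d" using d0 nQ_lt1 by (simp add: mult_left_le)
  finally have s1: "av (c * ((x - y) * (1 - x^p) + (y - 1) * (y^p - x^p))) \<le> d" .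
  have s2: "av (x^p * x - y^p * y) \<le> d"
    using av_pow_diff[OF ax ay, of "Suc p"] unfolding d_def by (simp add: mult.commute)
  have "av (ps x - ps y) \<le> nQ * d" unfolding d_def by (rule ps_diff[OF ax ay])
  also have "\<dots> \<le> d" using d0 nQ_lt1 by (simp add: mult_left_le mult.commute)
  finally have s3: "av (ps x - ps y) \<le> d" .
  have s4: "av (x - y) \<le> d" unfolding d_def by simp
  have "av (c * ((x - y) * (1 - x^p) + (y - 1) * (y^p - x^p)) + (x^p * x - y^p * y) + (ps x - ps y) - (x - y)) \<le> d"
  proof -
    have "av (c * ((x - y) * (1 - x^p) + (y - 1) * (y^p - x^p)) + (x^p * x - y^p * y)) \<le> d"
      using order_trans[OF av_ultra max.boundedI[OF s1 s2]] .
    then have "av (c * ((x - y) * (1 - x^p) + (y - 1) * (y^p - x^p)) + (x^p * x - y^p * y) + (ps x - ps y)) \<le> d"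
      using order_trans[OF av_ultra max.boundedI[OF _ s3]] by blast
    then show ?thesis using order_trans[OF av_diff max.boundedI[OF _ s4]] by blast
  qed
  then show ?thesis using e unfolding c_def d_def by simp
qed

lemma G_diff:
  assumes l: "av (l - 1) < 1" and x: "av (x - 1) \<le> nQ / real p" and y: "av (y - 1) \<le> nQ / real p"
  shows "av (G l x - G l y) = real p * av (x - y)"
proof (cases "x = y")
  case True then show ?thesis by simp
next
  case False
  define c where "c = l / (of_nat p :: 'a)"
  have pos: "0 < av (x - y)" using False av_0_iff av_nonneg by (metis eq_iff_diff_eq_0 less_eq_real_def)
  have E: "av (G l x - G l y + c * (x - y)) \<le> av (x - y)" unfolding c_def by (rule G_key[OF l x y])
  have C: "av (- (c * (x - y))) = real p * av (x - y)" unfolding av_minus av_mult c_def av_c[OF l] ..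
  have "av (x - y) < real p * av (x - y)" using pos p_ge2 by simp
  then have lt: "av (G l x - G l y + c * (x - y)) < av (- (c * (x - y)))" using E C by simp
  have "av (- (c * (x - y)) + (G l x - G l y + c * (x - y))) = av (- (c * (x - y)))"
    by (rule av_strict[OF lt])
  then show ?thesis using C by simp
qed


lemma av_split: "av (x - z) \<le> max (av (x - y)) (av (y - z))"
  using av_ultra[of "x - y" "y - z"] by simp

lemma div_p_le: assumes "0 \<le> (x::real)" shows "x / real p \<le> x"
proof -
  have "x * 1 \<le> x * real p" by (rule mult_left_mono) (use p_ge2 assms in auto)
  then show ?thesis using p_pos by (simp add: divide_le_eq)
qed

definition F :: "'a \<Rightarrow> 'a \<Rightarrow> 'a" where "F l z = z + (of_nat p / l) * G l z"

lemma F_contr: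
  assumes l: "av (l - 1) < 1" and x: "av (x - 1) \<le> nQ / real p" and y: "av (y - 1) \<le> nQ / real p"
  shows "av (F l x - F l y) \<le> av (x - y) / real p"
proof -
  have nz: "l \<noteq> 0" by (rule lam_nz[OF l])
  have e: "F l x - F l y = (of_nat p / l) * (G l x - G l y + (l / of_nat p) * (x - y))"
    unfolding F_def using nz ofp_nz by (simp add: field_simps)
  have "av (F l x - F l y) = 1 / real p * av (G l x - G l y + (l / of_nat p) * (x - y))"
    unfolding e av_mult av_cinv[OF l] ..
  also have "\<dots> \<le> 1 / real p * av (x - y)"
    by (rule mult_left_mono[OF G_key[OF l x y]]) (use p_pos in simp)
  finally show ?thesis by simp
qed

lemma G_one: "G l 1 = ps 1"
  unfolding G_def Pl_def by (simp add: algebra_simps)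

lemma rp_le: "av (ps 1) / real p \<le> nQ / real p"
  using ps_bound[of 1] p_pos by (simp add: divide_right_mono)

lemma rp_nonneg: "0 \<le> av (ps 1) / real p"
  using av_nonneg p_pos by simp

lemma F_one: assumes l: "av (l - 1) < 1" shows "av (F l 1 - 1) = av (ps 1) / real p"
proof -
  have "F l 1 - 1 = (of_nat p / l) * ps 1" unfolding F_def G_one by simp
  then have "av (F l 1 - 1) = av (of_nat p / l) * av (ps 1)" by (simp only: av_mult)
  then show ?thesis using av_cinv[OF l] by simp
qed

lemma F_disc:
  assumes l: "av (l - 1) < 1" and z: "av (z - 1) \<le> av (ps 1) / real p"
  shows "av (F l z - 1) \<le> av (ps 1) / real p"
proof -
  have z': "av (z - 1) \<le> nQ / real p" using z rp_le by linarith
  have o: "av (1 - 1) \<le> nQ / real p" using nQ_nonneg p_pos by simp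
  have "av (F l z - F l 1) \<le> av (z - 1) / real p" using F_contr[OF l z' o] by simp
  also have "\<dots> \<le> av (z - 1)" by (rule div_p_le[OF av_nonneg])
  finally have a1: "av (F l z - F l 1) \<le> av (ps 1) / real p" using z by linarith
  have "av (F l z - 1) \<le> max (av (F l z - F l 1)) (av (F l 1 - 1))" by (rule av_split)
  then show ?thesis using a1 F_one[OF l] by simp
qed

lemma fix_exists:
  assumes l: "av (l - 1) < 1"
  shows "\<exists>z. av (z - 1) \<le> av (ps 1) / real p \<and> G l z = 0"
proof -
  define r where "r = av (ps 1) / real p"
  define zs where "zs n = (F l ^^ n) 1" for n
  have r0: "0 \<le> r" unfolding r_def by (rule rp_nonneg)
  have zs_Suc: "zs (Suc n) = F l (zs n)" for n unfolding zs_def by simp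
  have zd: "av (zs n - 1) \<le> r" for n
  proof (induction n)
    case 0 then show ?case using r0 by (simp add: zs_def)
  next
    case (Suc n) then show ?case unfolding zs_Suc r_def by (rule F_disc[OF l])
  qed
  have zd': "av (zs n - 1) \<le> nQ / real p" for n using zd[of n] rp_le unfolding r_def by linarith
  have q0: "0 \<le> 1 / real p" "1 / real p \<le> 1" using p_ge2 by auto
  have stp: "av (zs (Suc n) - zs n) \<le> r * (1 / real p) ^ n" for n
  proof (induction n)
    case 0 then show ?case using F_one[OF l] unfolding zs_def r_def by simp
  next
    case (Suc n)
    have "av (zs (Suc (Suc n)) - zs (Suc n)) = av (F l (zs (Suc n)) - F l (zs n))" by (simp only: zs_Suc)
    also have "\<dots> \<le> av (zs (Suc n) - zs n) / real p" by (rule F_contr[OF l zd' zd'])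
    also have "\<dots> \<le> r * (1 / real p) ^ n / real p" using Suc p_pos by (simp add: divide_right_mono)
    also have "\<dots> = r * (1 / real p) ^ Suc n" by (simp add: field_simps)
    finally show ?case .
  qed
  have cb: "av (zs m - zs n) \<le> r * (1 / real p) ^ n" if "n \<le> m" for m n
    using that
  proof (induction m rule: dec_induct)
    case base then show ?case using r0 by simp
  next
    case (step m)
    have "(1 / real p) ^ m \<le> (1 / real p) ^ n" using step(1) q0 by (intro power_decreasing) auto
    then have "r * (1 / real p) ^ m \<le> r * (1 / real p) ^ n" by (rule mult_left_mono[OF _ r0])
    then have s1: "av (zs (Suc m) - zs m) \<le> r * (1 / real p) ^ n" using stp[of m] by linarith
    have "av (zs (Suc m) - zs n) \<le> max (av (zs (Suc m) - zs m)) (av (zs m - zs n))"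
      by (rule av_split)
    then show ?case using s1 step(3) by simp
  qed
  have lim: "(\<lambda>n. r * (1 / real p) ^ n) \<longlonglongrightarrow> 0"
  proof -
    have "norm (1 / real p) < 1" using p_ge2 by simp
    then have "(\<lambda>n. r * (1 / real p) ^ n) \<longlonglongrightarrow> r * 0"
      by (intro tendsto_mult tendsto_const LIMSEQ_power_zero)
    then show ?thesis by simp
  qed
  have cau: "\<forall>e>0. \<exists>N. \<forall>m\<ge>N. \<forall>n\<ge>N. av (zs m - zs n) < e"
  proof (intro allI impI)
    fix e :: real assume e: "e > 0"
    then obtain N where N: "\<forall>n\<ge>N. norm (r * (1 / real p) ^ n - 0) < e"
      using lim unfolding LIMSEQ_iff by blast
    then have "norm (r * (1 / real p) ^ N) < e" by simp
    then have "\<bar>r * (1 / real p) ^ N\<bar> < e" by (simp only: real_norm_def)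
    then have hN: "r * (1 / real p) ^ N < e" using abs_ge_self[of "r * (1 / real p) ^ N"] by linarith
    have mono: "r * (1 / real p) ^ k \<le> r * (1 / real p) ^ N" if "N \<le> k" for k
      by (rule mult_left_mono[OF _ r0]) (use that q0 in \<open>intro power_decreasing\<close>, auto)
    show "\<exists>N. \<forall>m\<ge>N. \<forall>n\<ge>N. av (zs m - zs n) < e"
    proof (intro exI[of _ N] allI impI)
      fix m n assume mN: "N \<le> m" and nN: "N \<le> n"
      show "av (zs m - zs n) < e"
      proof (cases "n \<le> m")
        case True
        then show ?thesis using cb[OF True] mono[OF nN] hN by linarith
      next
        case False
        then have "m \<le> n" by simp
        then show ?thesis using cb[of m n] mono[OF mN] hN av_diff_comm[of "zs m" "zs n"] by linarith
      qed
    qed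
  qed
  obtain L where L: "(\<lambda>n. av (zs n - L)) \<longlonglongrightarrow> 0" using av_complete[OF cau] by blast
  have L1: "av (L - 1) \<le> r"
  proof (rule le_lim[OF L _ r0])
    fix n
    have "av (L - 1) \<le> max (av (L - zs n)) (av (zs n - 1))" by (rule av_split)
    then show "av (L - 1) \<le> max (av (zs n - L)) r" using zd[of n] av_diff_comm[of L "zs n"] by (auto simp: max_def split: if_split_asm)
  qed
  have L1': "av (L - 1) \<le> nQ / real p" using L1 rp_le unfolding r_def by linarith
  have FL: "av (F l L - L) \<le> 0"
  proof (rule le_lim)
    show "(\<lambda>n. max (av (zs n - L)) (av (zs (Suc n) - L))) \<longlonglongrightarrow> 0"
      using tendsto_max[OF L LIMSEQ_Suc[OF L]] by simp
    fix n
    have "av (F l L - L) \<le> max (av (F l L - F l (zs n))) (av (F l (zs n) - L))" by (rule av_split)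
    then have "av (F l L - L) \<le> max (av (F l L - F l (zs n))) (av (zs (Suc n) - L))" by (simp only: zs_Suc)
    moreover have "av (F l L - F l (zs n)) \<le> av (L - zs n) / real p" by (rule F_contr[OF l L1' zd'])
    moreover have "av (L - zs n) / real p \<le> av (zs n - L)"
      using div_p_le[OF av_nonneg, of "L - zs n"] av_diff_comm[of L "zs n"] by simp
    ultimately show "av (F l L - L) \<le> max (max (av (zs n - L)) (av (zs (Suc n) - L))) 0"
      by (simp add: max_def split: if_splits)
  qed simp
  then have "F l L - L = 0" using av_nonneg[of "F l L - L"] av_0_iff by simp
  then have "(of_nat p / l) * G l L = 0" unfolding F_def by simp
  then have "G l L = 0" using lam_nz[OF l] ofp_nz by simp
  then show ?thesis using L1 unfolding r_def by blast
qed

lemma G_zero_iff: "G l z = 0 \<longleftrightarrow> Pl p l z + ps z = z"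
  unfolding G_def by (simp add: algebra_simps)

lemma h_prop:
  assumes l: "av (l - 1) < 1"
  shows "av (hfix p av a l - 1) \<le> av (ps 1) / real p \<and> G l (hfix p av a l) = 0"
proof -
  have ex: "\<exists>!z. av (z - 1) \<le> av (ps 1) / real p \<and> Pl p l z + ps z = z"
  proof -
    obtain z where z: "av (z - 1) \<le> av (ps 1) / real p" "G l z = 0" using fix_exists[OF l] by blast
    show ?thesis
    proof (rule ex1I[of _ z])
      show "av (z - 1) \<le> av (ps 1) / real p \<and> Pl p l z + ps z = z" using z G_zero_iff by simp
      fix y assume y: "av (y - 1) \<le> av (ps 1) / real p \<and> Pl p l y + ps y = y"
      have y1: "av (y - 1) \<le> nQ / real p" using y rp_le by linarith
      have z1: "av (z - 1) \<le> nQ / real p" using z rp_le by linarith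
      have "av (G l y - G l z) = real p * av (y - z)" by (rule G_diff[OF l y1 z1])
      moreover have "G l y = 0" using y G_zero_iff by simp
      ultimately have "real p * av (y - z) = 0" using z by simp
      then have "av (y - z) = 0" using p_pos by simp
      then show "y = z" using av_0_iff by simp
    qed
  qed
  have "av (hfix p av a l - 1) \<le> av (ps 1) / real p \<and> Pl p l (hfix p av a l) + ps (hfix p av a l) = hfix p av a l"
    unfolding hfix_def by (rule theI'[OF ex])
  then show ?thesis using G_zero_iff by simp
qed

end



lemma Q_ident:
  fixes c0 c1 Z0 Z1 z0 z1 u0 u1 h0 h1 :: "'a::field"
  shows "(c0 * Z0 + (1 - c0) * (Z0 * z0) + u0 + 1 - h0) - (c1 * Z1 + (1 - c1) * (Z1 * z1) + u1 + 1 - h1)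
     - (c0 - c1) * (Z1 * (1 - z1))
   = c0 * (Z0 - Z1) + (1 - c0) * (Z0 * z0 - Z1 * z1) + (u0 - u1) - (h0 - h1)"
  by (simp add: algebra_simps)

lemma P_ident:
  fixes a0 a1 X h :: "'a::field"
  shows "(a0 * X + (1 - a0) * (X * h)) - (a1 * X + (1 - a1) * (X * h)) = (a0 - a1) * (X * (1 - h))"
  by (simp add: algebra_simps)

context cpa
begin

abbreviation "hf \<equiv> hfix p av a"

lemma h_disc: "av (l - 1) < 1 \<Longrightarrow> av (hf l - 1) \<le> nQ / real p"
  using h_prop[of l] rp_le by linarith

lemma h_G: "av (l - 1) < 1 \<Longrightarrow> G l (hf l) = 0"
  using h_prop[of l] by simp

lemma nQp_lt1: "nQ / real p < 1"
  using nQ_lt1 nQ_nonneg p_ge2 by (simp add: divide_less_eq)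

lemma nQp_lt_rho: "nQ / real p < rho p"
proof -
  have "nQ / real p \<le> nQ" by (rule div_p_le[OF nQ_nonneg])
  then show ?thesis using nrm by linarith
qed

lemma h_av: "av (l - 1) < 1 \<Longrightarrow> av (hf l) = 1"
  using lam_av[of "hf l"] h_disc[of l] nQp_lt1 by simp

lemma av_1c: assumes l: "av (l - 1) < 1" shows "av (1 - l / of_nat p) = real p"
proof -
  have e: "1 - l / of_nat p = (of_nat p - l) / of_nat p" using ofp_nz by (simp add: field_simps)
  have "av (of_nat p :: 'a) < av l" using lam_av[OF l] av_p p_ge2 by simp
  then have "av (- l + of_nat p) = av (- l)" by (intro av_strict) simp
  then have "av (of_nat p - l) = 1" using lam_av[OF l] by simp
  then show ?thesis unfolding e av_divide using av_p by simp
qed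

lemma h_diff:
  assumes l0: "av (l0 - 1) < 1" and l1: "av (l1 - 1) < 1"
  shows "av (hf l0 - hf l1) = av (l0 - l1) * av (hf l1 - 1)"
proof -
  define h0 where "h0 = hf l0"
  define h1 where "h1 = hf l1"
  have d0: "av (h0 - 1) \<le> nQ / real p" unfolding h0_def by (rule h_disc[OF l0])
  have d1: "av (h1 - 1) \<le> nQ / real p" unfolding h1_def by (rule h_disc[OF l1])
  have g0: "G l0 h0 = 0" unfolding h0_def by (rule h_G[OF l0])
  have g1: "G l1 h1 = 0" unfolding h1_def by (rule h_G[OF l1])
  have a1: "av h1 = 1" unfolding h1_def by (rule h_av[OF l1])
  have "G l0 h1 - G l1 h1 = Pl p l0 h1 - Pl p l1 h1" unfolding G_def by simp
  also have "\<dots> = (l0 / of_nat p - l1 / of_nat p) * (h1^p * (1 - h1))"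
    unfolding Pl_eq by (rule P_ident)
  also have "\<dots> = ((l0 - l1) / of_nat p) * (h1^p * (1 - h1))" by (simp add: diff_divide_distrib)
  finally have e: "G l0 h1 - G l1 h1 = ((l0 - l1) / of_nat p) * (h1^p * (1 - h1))" .
  have "av (G l0 h1 - G l1 h1) = av (l0 - l1) * real p * av (h1 - 1)"
    unfolding e av_mult av_divide av_power a1 av_p using av_diff_comm[of 1 h1] p_pos by simp
  moreover have "av (G l0 h0 - G l0 h1) = real p * av (h0 - h1)" by (rule G_diff[OF l0 d0 d1])
  moreover have "av (G l0 h0 - G l0 h1) = av (G l0 h1 - G l1 h1)"
  proof -
    have "G l0 h0 - G l0 h1 = - (G l0 h1 - G l1 h1)" using g0 g1 by simp
    then show ?thesis by (simp only: av_minus)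
  qed
  ultimately have "real p * av (h0 - h1) = real p * (av (l0 - l1) * av (h1 - 1))"
    using p_pos_nat by (simp add: ac_simps)
  then have "av (h0 - h1) = av (l0 - l1) * av (h1 - 1)" using p_pos_nat by simp
  then show ?thesis unfolding h0_def h1_def .
qed

lemma Q_unfold: "Qlam p av a l y = (l / of_nat p) * (y + hf l - 1)^p + (1 - l / of_nat p) * ((y + hf l - 1)^p * (y + hf l - 1))
   + ps (y + hf l - 1) + 1 - hf l"
  unfolding Qlam_def Let_def Pl_eq ..

lemma z_av:
  assumes l: "av (l - 1) < 1" and y: "av y = rho_seq p (Suc j)"
  shows "av (y + hf l - 1) = rho_seq p (Suc j)"
proof -
  have "av (hf l - 1) < av y" using h_disc[OF l] nQp_lt_rho rs_ge[of "Suc j"] y by linarith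
  then have "av (y + (hf l - 1)) = av y" by (rule av_strict)
  then show ?thesis using y by (simp add: add_diff_eq)
qed

lemma prs: "real p * rho_seq p (Suc j) ^ p = rho_seq p j"
  using rs_pow[of j] p_pos by simp

lemma image_av:
  assumes l: "av (l - 1) < 1" and y: "av y = rho_seq p (Suc j)"
  shows "av (Qlam p av a l y) = rho_seq p j"
proof -
  define z where "z = y + hf l - 1"
  define r where "r = rho_seq p (Suc j)"
  define c where "c = l / (of_nat p :: 'a)"
  have az: "av z = r" unfolding z_def r_def by (rule z_av[OF l y])
  have r1: "r < 1" unfolding r_def by (rule rs_lt1)
  have r0: "0 < r" unfolding r_def by (rule rs_pos)
  have rj: "rho p \<le> rho_seq p j" by (rule rs_ge)
  have t0: "av (c * z^p) = rho_seq p j"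
    unfolding av_mult av_power az c_def av_c[OF l] r_def by (rule prs)
  have "av ((1 - c) * (z^p * z)) = rho_seq p j * r"
    unfolding av_mult av_power az c_def av_1c[OF l] using prs[of j] unfolding r_def by simp
  also have "\<dots> < rho_seq p j" using r1 rs_pos[of j] by simp
  finally have t1: "av ((1 - c) * (z^p * z)) < rho_seq p j" .
  have "av (ps z) \<le> nQ" using ps_bound[of z] az r1 by simp
  then have t2: "av (ps z) < rho_seq p j" using nrm rj by linarith
  have t3: "av (1 - hf l) < rho_seq p j"
    using h_disc[OF l] nQp_lt_rho rj av_diff_comm[of 1 "hf l"] by linarith
  have "av ((1 - c) * (z^p * z) + ps z + (1 - hf l)) < rho_seq p j"
  proof -
    have "av ((1 - c) * (z^p * z) + ps z) < rho_seq p j"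
      using av_ultra[of "(1 - c) * (z^p * z)" "ps z"] t1 t2 by simp
    then show ?thesis using av_ultra[of "(1 - c) * (z^p * z) + ps z" "1 - hf l"] t3 by simp
  qed
  then have lt: "av ((1 - c) * (z^p * z) + ps z + (1 - hf l)) < av (c * z^p)" using t0 by simp
  have "av (c * z^p + ((1 - c) * (z^p * z) + ps z + (1 - hf l))) = av (c * z^p)"
    by (rule av_strict[OF lt])
  moreover have "Qlam p av a l y = c * z^p + ((1 - c) * (z^p * z) + ps z + (1 - hf l))"
    unfolding Q_unfold z_def[symmetric] c_def by (simp add: algebra_simps)
  ultimately show ?thesis using t0 by simp
qed


lemma bin_bound:
  assumes d0: "0 \<le> dd" and dS: "dd \<le> S_const p"
  shows "real p * max (rho_seq p (Suc j) ^ (p - 1) * dd / real p) (dd ^ p) \<le> rho_seq p j * dd"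
proof -
  define r where "r = rho_seq p (Suc j)"
  have r0: "0 < r" unfolding r_def by (rule rs_pos)
  have pr: "real p * r ^ p = rho_seq p j" unfolding r_def by (rule prs)
  have rp: "r ^ p = r ^ (p - 1) * r" using p_pos_nat by (metis power_minus_mult)
  have "r ^ (p - 1) * 1 \<le> r ^ (p - 1) * (real p * r)"
    using prs_ge1[of "Suc j"] r0 unfolding r_def by (intro mult_left_mono) auto
  then have a1: "r ^ (p - 1) \<le> rho_seq p j" using pr rp by (simp add: ac_simps)
  have b1: "real p * (r ^ (p - 1) * dd / real p) \<le> rho_seq p j * dd"
    using mult_right_mono[OF a1 d0] p_pos by simp
  have "dd ^ (p - 1) \<le> S_const p ^ (p - 1)" by (rule power_mono[OF dS d0])
  then have "real p * dd ^ (p - 1) \<le> real p * S_const p ^ (p - 1)" by (rule mult_left_mono) (use p_pos in simp)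
  also have "real p * S_const p ^ (p - 1) = rho p" unfolding S_pow using p_pos by simp
  finally have "real p * dd ^ (p - 1) \<le> rho p" .
  then have "real p * dd ^ (p - 1) \<le> rho_seq p j" using rs_ge[of j] by linarith
  then have "real p * dd ^ (p - 1) * dd \<le> rho_seq p j * dd" by (rule mult_right_mono[OF _ d0])
  moreover have "dd ^ p = dd ^ (p - 1) * dd" using p_pos_nat by (metis power_minus_mult)
  ultimately have b2: "real p * dd ^ p \<le> rho_seq p j * dd" by (simp add: ac_simps)
  show ?thesis using b1 b2 unfolding r_def by (simp add: max_def)
qed

lemma diff_step:
  assumes l0: "av (l0 - 1) < 1" and l1: "av (l1 - 1) < 1"
    and y0: "av y0 = rho_seq p (Suc j)" and y1: "av y1 = rho_seq p (Suc j)"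
    and DS: "max (av (y0 - y1)) (av (hf l0 - hf l1)) \<le> S_const p"
  shows "av (Qlam p av a l0 y0 - Qlam p av a l1 y1 - ((l0 - l1) / of_nat p) * ((y1 + hf l1 - 1)^p * (1 - (y1 + hf l1 - 1))))
           \<le> max (rho_seq p j * max (av (y0 - y1)) (av (hf l0 - hf l1))) (av (hf l0 - hf l1))"
    and "av (((l0 - l1) / of_nat p) * ((y1 + hf l1 - 1)^p * (1 - (y1 + hf l1 - 1)))) = av (l0 - l1) * rho_seq p j"
proof -
  define z0 where "z0 = y0 + hf l0 - 1"
  define z1 where "z1 = y1 + hf l1 - 1"
  define r where "r = rho_seq p (Suc j)"
  define c0 where "c0 = l0 / (of_nat p :: 'a)"
  define c1 where "c1 = l1 / (of_nat p :: 'a)"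
  define D where "D = max (av (y0 - y1)) (av (hf l0 - hf l1))"
  define dd where "dd = av (z0 - z1)"
  have az0: "av z0 = r" unfolding z0_def r_def by (rule z_av[OF l0 y0])
  have az1: "av z1 = r" unfolding z1_def r_def by (rule z_av[OF l1 y1])
  have r1: "r < 1" unfolding r_def by (rule rs_lt1)
  have r0: "0 < r" unfolding r_def by (rule rs_pos)
  have rjp: "0 < rho_seq p j" by (rule rs_pos)
  have d0: "0 \<le> dd" unfolding dd_def by (rule av_nonneg)
  have dD: "dd \<le> D"
  proof -
    have "z0 - z1 = (y0 - y1) + (hf l0 - hf l1)" unfolding z0_def z1_def by simp
    then have "dd \<le> max (av (y0 - y1)) (av (hf l0 - hf l1))" unfolding dd_def using av_ultra by simp
    then show ?thesis unfolding D_def .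
  qed
  have dS: "dd \<le> S_const p" using dD DS unfolding D_def by linarith
  have dr: "dd \<le> av z1" using dS S_le_rho rs_ge[of "Suc j"] az1 unfolding r_def by linarith
  have Q0: "Qlam p av a l0 y0 = c0 * z0^p + (1 - c0) * (z0^p * z0) + ps z0 + 1 - hf l0"
    unfolding Q_unfold z0_def c0_def ..
  have Q1: "Qlam p av a l1 y1 = c1 * z1^p + (1 - c1) * (z1^p * z1) + ps z1 + 1 - hf l1"
    unfolding Q_unfold z1_def c1_def ..
  have cc: "(l0 - l1) / of_nat p = c0 - c1" unfolding c0_def c1_def by (simp add: diff_divide_distrib)
  have e: "Qlam p av a l0 y0 - Qlam p av a l1 y1 - ((l0 - l1) / of_nat p) * (z1^p * (1 - z1))
      = c0 * (z0^p - z1^p) + (1 - c0) * (z0^p * z0 - z1^p * z1) + (ps z0 - ps z1) - (hf l0 - hf l1)"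
    unfolding Q0 Q1 cc by (rule Q_ident)
  have T1: "av (c0 * (z0^p - z1^p)) \<le> rho_seq p j * dd"
  proof -
    have "av ((z1 + (z0 - z1))^p - z1^p) \<le> max (av z1 ^ (p-1) * av (z0 - z1) / real p) (av (z0 - z1) ^ p)"
      by (rule av_binom) (use dr dd_def in simp)
    then have "av (z0^p - z1^p) \<le> max (r ^ (p-1) * dd / real p) (dd ^ p)" unfolding az1 dd_def by simp
    then have "real p * av (z0^p - z1^p) \<le> real p * max (r ^ (p-1) * dd / real p) (dd ^ p)"
      by (rule mult_left_mono) (use p_pos in simp)
    also have "\<dots> \<le> rho_seq p j * dd" unfolding r_def by (rule bin_bound[OF d0 dS])
    finally show ?thesis unfolding av_mult c0_def av_c[OF l0] .
  qed
  have T2: "av ((1 - c0) * (z0^p * z0 - z1^p * z1)) \<le> rho_seq p j * dd"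
  proof -
    have "av (z0^Suc p - z1^Suc p) \<le> av (z0 - z1) * r ^ (Suc p - 1)"
      by (rule av_pow_diff) (use az0 az1 in simp_all)
    then have "av (z0^p * z0 - z1^p * z1) \<le> dd * r ^ p" unfolding dd_def power_Suc2 diff_Suc_1 .
    then have "real p * av (z0^p * z0 - z1^p * z1) \<le> real p * (dd * r ^ p)"
      by (rule mult_left_mono) (use p_pos in simp)
    also have "\<dots> = rho_seq p j * dd" using prs[of j] unfolding r_def by (simp add: ac_simps)
    finally show ?thesis unfolding av_mult c0_def av_1c[OF l0] .
  qed
  have T3: "av (ps z0 - ps z1) \<le> rho_seq p j * dd"
  proof -
    have "av (ps z0 - ps z1) \<le> nQ * dd" unfolding dd_def by (rule ps_diff) (use az0 az1 r1 in simp_all)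
    also have "\<dots> \<le> rho_seq p j * dd" using nrm rs_ge[of j] d0 by (intro mult_right_mono) auto
    finally show ?thesis .
  qed
  have "av (c0 * (z0^p - z1^p) + (1 - c0) * (z0^p * z0 - z1^p * z1)) \<le> rho_seq p j * dd"
    using av_ultra[of "c0 * (z0^p - z1^p)" "(1 - c0) * (z0^p * z0 - z1^p * z1)"] T1 T2 by simp
  then have "av (c0 * (z0^p - z1^p) + (1 - c0) * (z0^p * z0 - z1^p * z1) + (ps z0 - ps z1)) \<le> rho_seq p j * dd"
    using av_ultra[of "c0 * (z0^p - z1^p) + (1 - c0) * (z0^p * z0 - z1^p * z1)" "ps z0 - ps z1"] T3 by simp
  then have "av (c0 * (z0^p - z1^p) + (1 - c0) * (z0^p * z0 - z1^p * z1) + (ps z0 - ps z1) - (hf l0 - hf l1))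
      \<le> max (rho_seq p j * dd) (av (hf l0 - hf l1))"
    using av_diff[of "c0 * (z0^p - z1^p) + (1 - c0) * (z0^p * z0 - z1^p * z1) + (ps z0 - ps z1)" "hf l0 - hf l1"]
    by (simp add: max_def split: if_split_asm)
  moreover have "rho_seq p j * dd \<le> rho_seq p j * D" using dD rjp by simp
  ultimately have "av (Qlam p av a l0 y0 - Qlam p av a l1 y1 - ((l0 - l1) / of_nat p) * (z1^p * (1 - z1)))
      \<le> max (rho_seq p j * D) (av (hf l0 - hf l1))" unfolding e by (simp add: max_def split: if_split_asm)
  then show "av (Qlam p av a l0 y0 - Qlam p av a l1 y1 - ((l0 - l1) / of_nat p) * ((y1 + hf l1 - 1)^p * (1 - (y1 + hf l1 - 1))))
           \<le> max (rho_seq p j * max (av (y0 - y1)) (av (hf l0 - hf l1))) (av (hf l0 - hf l1))"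
    unfolding z1_def D_def .
  have a1z: "av (1 - z1) = 1"
  proof -
    have "av z1 < av 1" using az1 r1 by simp
    then show ?thesis using av_strict_diff[of z1 1] by simp
  qed
  show "av (((l0 - l1) / of_nat p) * ((y1 + hf l1 - 1)^p * (1 - (y1 + hf l1 - 1)))) = av (l0 - l1) * rho_seq p j"
    unfolding z1_def[symmetric] av_mult av_divide av_power a1z az1 av_p using prs[of j] p_pos unfolding r_def
    by (simp add: field_simps)
qed

end



context cpa
begin

lemma main:
  assumes m1: "m \<ge> 1"
    and x0: "av x0 = rho_seq p m" and x1: "av x1 = rho_seq p m"
    and xS: "av (x0 - x1) \<le> S_const p"
    and l0: "av (l0 - 1) < 1" and l1: "av (l1 - 1) < 1"
    and pr: "(\<Prod>k\<in>{1..<m}. rho_seq p k) * av (x0 - x1) < av (l0 - l1)"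
    and lS: "av (l0 - l1) \<le> S_const p"
  shows "av ((Qlam p av a l0 ^^ m) x0 - (Qlam p av a l1 ^^ m) x1) = av (l0 - l1)"
proof -
  define Y0 where "Y0 k = (Qlam p av a l0 ^^ k) x0" for k
  define Y1 where "Y1 k = (Qlam p av a l1 ^^ k) x1" for k
  define dl where "dl = av (l0 - l1)"
  define dh where "dh = av (hf l0 - hf l1)"
  define dx where "dx = av (x0 - x1)"
  define A where "A = max (dl * rho_seq p 1) dh"
  define T where "T k = (\<Prod>i\<in>{m-k..<m}. rho_seq p i)" for k
  have Y0S: "Y0 (Suc k) = Qlam p av a l0 (Y0 k)" for k unfolding Y0_def by simp
  have Y1S: "Y1 (Suc k) = Qlam p av a l1 (Y1 k)" for k unfolding Y1_def by simp
  have T01: "0 \<le> T k \<and> T k \<le> 1" for k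
    unfolding T_def using rs_pos rs_le1 by (auto intro: prod_nonneg prod_le_1 less_imp_le)
  have dx0: "0 \<le> dx" unfolding dx_def by (rule av_nonneg)
  have dlpos: "0 < dl"
  proof -
    have "0 \<le> (\<Prod>k\<in>{1..<m}. rho_seq p k) * av (x0 - x1)"
      using rs_pos av_nonneg by (intro mult_nonneg_nonneg prod_nonneg) (auto intro: less_imp_le)
    then show ?thesis using pr unfolding dl_def by linarith
  qed
  have dh_lt: "dh < dl"
  proof -
    have "dh = dl * av (hf l1 - 1)" unfolding dh_def dl_def by (rule h_diff[OF l0 l1])
    moreover have "av (hf l1 - 1) < 1" using h_disc[OF l1] nQp_lt1 by linarith
    ultimately show ?thesis using dlpos by simp
  qed
  have dh0: "0 \<le> dh" unfolding dh_def by (rule av_nonneg)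
  have r1: "rho_seq p 1 < 1" using rs_lt1[of 0] by simp
  have A_lt: "A < dl" unfolding A_def using dh_lt dlpos r1 by simp
  have A0: "0 \<le> A" unfolding A_def using dh0 by simp
  have dlS: "dl \<le> S_const p" unfolding dl_def by (rule lS)
  have dxS: "dx \<le> S_const p" unfolding dx_def by (rule xS)
  have inv: "k < m \<Longrightarrow> av (Y0 k) = rho_seq p (m - k) \<and> av (Y1 k) = rho_seq p (m - k)
      \<and> av (Y0 k - Y1 k) \<le> max (T k * dx) A" for k
  proof (induction k)
    case 0
    then show ?case unfolding Y0_def Y1_def T_def using x0 x1 dx_def by simp
  next
    case (Suc k)
    then have km: "k < m" by simp
    define j where "j = m - Suc k"
    have mk: "m - k = Suc j" unfolding j_def using Suc.prems by simp
    have j1: "1 \<le> j" unfolding j_def using Suc.prems by simp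
    have IH: "av (Y0 k) = rho_seq p (Suc j)" "av (Y1 k) = rho_seq p (Suc j)"
        "av (Y0 k - Y1 k) \<le> max (T k * dx) A"
      using Suc.IH[OF km] mk by auto
    have Tk: "T k * dx \<le> dx" using T01[of k] dx0 by (simp add: mult_left_le_one_le)
    have DS: "max (av (Y0 k - Y1 k)) dh \<le> S_const p"
      using IH(3) Tk dxS A_lt dlS dh_lt by (simp add: max_def split: if_split_asm)
    have a0: "av (Y0 (Suc k)) = rho_seq p j" unfolding Y0S by (rule image_av[OF l0 IH(1)])
    have a1: "av (Y1 (Suc k)) = rho_seq p j" unfolding Y1S by (rule image_av[OF l1 IH(2)])
    define Lt where "Lt = ((l0 - l1) / of_nat p) * ((Y1 k + hf l1 - 1)^p * (1 - (Y1 k + hf l1 - 1)))"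
    have R: "av (Y0 (Suc k) - Y1 (Suc k) - Lt) \<le> max (rho_seq p j * max (av (Y0 k - Y1 k)) dh) dh"
      unfolding Y0S Y1S Lt_def dh_def by (rule diff_step(1)[OF l0 l1 IH(1) IH(2)]) (use DS dh_def in simp)
    have L: "av Lt = dl * rho_seq p j"
      unfolding Lt_def dl_def by (rule diff_step(2)[OF l0 l1 IH(1) IH(2)]) (use DS dh_def in simp)
    have Tsuc: "T (Suc k) = rho_seq p j * T k"
    proof -
      have "m - Suc k < m" using Suc.prems by simp
      then have "T (Suc k) = rho_seq p (m - Suc k) * (\<Prod>i\<in>{Suc (m - Suc k)..<m}. rho_seq p i)"
        unfolding T_def by (rule prod.atLeast_Suc_lessThan)
      also have "Suc (m - Suc k) = m - k" using Suc.prems by simp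
      finally show ?thesis unfolding T_def j_def .
    qed
    have rj0: "0 < rho_seq p j" by (rule rs_pos)
    have rj1: "rho_seq p j \<le> rho_seq p 1" using rs_mono[OF j1] .
    have rjle: "rho_seq p j \<le> 1" by (rule rs_le1)
    have b1: "dl * rho_seq p j \<le> A" unfolding A_def using rj1 dlpos by (simp add: le_max_iff_disj)
    have b2: "rho_seq p j * av (Y0 k - Y1 k) \<le> max (T (Suc k) * dx) A"
    proof -
      have "rho_seq p j * av (Y0 k - Y1 k) \<le> rho_seq p j * max (T k * dx) A"
        using IH(3) rj0 by simp
      also have "\<dots> = max (rho_seq p j * (T k * dx)) (rho_seq p j * A)"
        using rj0 by (simp add: max_def mult_left_mono)
      also have "\<dots> \<le> max (T (Suc k) * dx) A"
      proof (rule max.mono)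
        show "rho_seq p j * (T k * dx) \<le> T (Suc k) * dx" using Tsuc by simp
        show "rho_seq p j * A \<le> A" by (rule mult_left_le_one_le[OF A0 less_imp_le[OF rj0] rjle])
      qed
      finally show ?thesis .
    qed
    have b3: "rho_seq p j * dh \<le> A"
    proof -
      have "rho_seq p j * dh \<le> dh" by (rule mult_left_le_one_le[OF dh0 less_imp_le[OF rj0] rjle])
      then show ?thesis unfolding A_def by simp
    qed
    have b4: "dh \<le> A" unfolding A_def by simp
    have "av (Y0 (Suc k) - Y1 (Suc k)) \<le> max (av Lt) (av (Y0 (Suc k) - Y1 (Suc k) - Lt))"
      using av_ultra[of Lt "Y0 (Suc k) - Y1 (Suc k) - Lt"] by simp
    also have "\<dots> \<le> max (T (Suc k) * dx) A"
    proof -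
      have "rho_seq p j * max (av (Y0 k - Y1 k)) dh = max (rho_seq p j * av (Y0 k - Y1 k)) (rho_seq p j * dh)"
        using rj0 by (simp add: max_def mult_left_mono)
      then have "av (Y0 (Suc k) - Y1 (Suc k) - Lt) \<le> max (T (Suc k) * dx) A"
        using R b2 b3 b4 by (simp add: max_def split: if_split_asm)
      then show ?thesis using L b1 by simp
    qed
    finally show ?case using a0 a1 unfolding j_def by simp
  qed
  have km: "m - 1 < m" using m1 by simp
  have mS: "m = Suc (m - 1)" using m1 by simp
  have mm: "m - (m - 1) = Suc 0" using m1 by simp
  have IH: "av (Y0 (m - 1)) = rho_seq p (Suc 0)" "av (Y1 (m - 1)) = rho_seq p (Suc 0)"
      "av (Y0 (m - 1) - Y1 (m - 1)) \<le> max (T (m - 1) * dx) A"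
    using inv[OF km] mm by auto
  have Tm: "T (m - 1) * dx < dl" unfolding T_def mm dl_def dx_def using pr by simp
  have DS: "max (av (Y0 (m - 1) - Y1 (m - 1))) dh \<le> S_const p"
  proof -
    have "T (m - 1) * dx \<le> dx" using T01[of "m - 1"] dx0 by (simp add: mult_left_le_one_le)
    then show ?thesis using IH(3) dxS A_lt dlS dh_lt by (simp add: max_def split: if_split_asm)
  qed
  define Lt where "Lt = ((l0 - l1) / of_nat p) * ((Y1 (m - 1) + hf l1 - 1)^p * (1 - (Y1 (m - 1) + hf l1 - 1)))"
  have R: "av (Y0 m - Y1 m - Lt) \<le> max (rho_seq p 0 * max (av (Y0 (m - 1) - Y1 (m - 1))) dh) dh"
    unfolding Lt_def dh_def by (subst (1 2) mS, unfold Y0S Y1S, rule diff_step(1)[OF l0 l1 IH(1) IH(2)]) (use DS dh_def in simp)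
  have L: "av Lt = dl"
    unfolding Lt_def dl_def using diff_step(2)[OF l0 l1 IH(1) IH(2)] DS dh_def by simp
  have "av (Y0 m - Y1 m - Lt) < av Lt"
    using R L IH(3) Tm A_lt dh_lt by (simp add: max_def split: if_split_asm)
  then have "av (Lt + (Y0 m - Y1 m - Lt)) = av Lt" by (rule av_strict)
  then have "av (Y0 m - Y1 m) = dl" using L by simp
  then show ?thesis unfolding Y0_def Y1_def dl_def .
qed

end

theorem lemma3p13:
  fixes p :: nat and av :: "'a::field \<Rightarrow> real" and rh :: real and a :: "nat \<Rightarrow> 'a"
    and m :: nat and x0 x1 l0 l1 :: 'a
  assumes "prime p" and "is_Cp p av"
    and "rh > 1" and "\<exists>c. c \<noteq> 0 \<and> av c = rh"
    and "in_HB av rh a" and "norm_HB av rh a < rho p"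
    and "m \<ge> 1"
    and "av x0 = rho_seq p m" and "av x1 = rho_seq p m"
    and "av (x0 - x1) \<le> S_const p"
    and "av (l0 - 1) < 1" and "av (l1 - 1) < 1"
    and "(\<Prod>k\<in>{1..<m}. rho_seq p k) * av (x0 - x1) < av (l0 - l1)"
    and "av (l0 - l1) \<le> S_const p"
  shows "av ((Qlam p av a l0 ^^ m) x0 - (Qlam p av a l1 ^^ m) x1) = av (l0 - l1)"
proof -
  have "cpa p av rh a" using assms(1,2,3,5,6) by (simp add: cpa_def cpa_axioms_def vf_def)
  then interpret cpa p av rh a .
  show ?thesis by (rule main[OF assms(7-14)])
qed

end
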